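(* Let $K$ be an infinite commutative domain and $R$ an associative $K$-algebra on which $K$ acts torsion-freely. Let $m,k,n\ge0$, $\alpha_0,\dots,\alpha_n\in K$, $\alpha=\sum_{i=0}^n\alpha_iy^ixy^{n-i}$, and suppose $y^m\alpha y^k=0$ for all $x,y\in R$. (i) If $\alpha_n\neq0$ then $y^{m+n}e_ny^k=0$ for all $x,y\in R$. (ii) If $\alpha_0\ne0$ then $y^me_ny^{n+k}=0$ for all $x,y\in R$. (iii) If $\alpha_0\neq0$ and $\alpha_n\neq0$ then $y^me_{3n-1}y^k=0$ for all $x,y\in R$.
   Context: $[a,b]=ab-ba$, $e_1=[x,y]$, $e_{j+1}=[e_j,y]$, and $e_0=x$. *)

theory Defs
  imports Main "HOL.Modules"
begin

text \<open>R is a possibly non-unital associative ring (class ring); powers y^i acting on the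
left/right are written as iterated multiplications so that y^0 z = z makes sense.\<close>

definition lpow :: "'r::ring \<Rightarrow> nat \<Rightarrow> 'r \<Rightarrow> 'r" where
  "lpow y i z = (((*) y) ^^ i) z"

definition rpow :: "'r::ring \<Rightarrow> 'r \<Rightarrow> nat \<Rightarrow> 'r" where
  "rpow z y j = ((\<lambda>w. w * y) ^^ j) z"

definition comm :: "'r::ring \<Rightarrow> 'r \<Rightarrow> 'r" where
  "comm a b = a * b - b * a"

fun eseq :: "'r::ring \<Rightarrow> 'r \<Rightarrow> nat \<Rightarrow> 'r" where
  "eseq x y 0 = x"
| "eseq x y (Suc j) = comm (eseq x y j) y"

definition algebra_over :: "('k::comm_ring_1 \<Rightarrow> 'r::ring \<Rightarrow> 'r) \<Rightarrow> bool" where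
  "algebra_over sc \<longleftrightarrow> module sc \<and>
     (\<forall>c a b. sc c (a * b) = sc c a * b \<and> sc c (a * b) = a * sc c b)"

definition torsion_free :: "('k::comm_ring_1 \<Rightarrow> 'r::ring \<Rightarrow> 'r) \<Rightarrow> bool" where
  "torsion_free sc \<longleftrightarrow> (\<forall>c r. sc c r = 0 \<longrightarrow> c = 0 \<or> r = 0)"

end

theory Submission imports Defs "HOL-Computational_Algebra.Polynomial"
begin

lemma lpow_0[simp]: "lpow y 0 w = w" by (simp add: lpow_def)
lemma lpow_Suc: "lpow y (Suc i) w = y * lpow y i w" by (simp add: lpow_def)
lemma rpow_0[simp]: "rpow w y 0 = w" by (simp add: rpow_def)
lemma rpow_Suc: "rpow w y (Suc j) = rpow w y j * y" by (simp add: rpow_def)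
lemma lpow_add: "lpow y i (lpow y j w) = lpow y (i + j) w"
  by (induct i) (simp_all add: lpow_Suc)
lemma rpow_add: "rpow (rpow w y i) y j = rpow w y (i + j)"
  by (induct j) (simp_all add: rpow_Suc)
lemma lpow_mult: "lpow y i (u * v) = lpow y i u * v"
  by (induct i) (simp_all add: lpow_Suc mult.assoc)
lemma rpow_mult: "rpow (u * v) y j = u * rpow v y j"
  by (induct j) (simp_all add: rpow_Suc mult.assoc)
lemma lpow_rpow: "lpow y i (rpow w y j) = rpow (lpow y i w) y j"
  by (induct j) (simp_all add: rpow_Suc lpow_mult)
lemma lpow_Suc': "lpow y (Suc i) w = lpow y i (y * w)"
  by (induct i) (simp_all add: lpow_Suc)
lemma rpow_Suc': "rpow w y (Suc j) = rpow (w * y) y j"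
  by (induct j) (simp_all add: rpow_Suc)
lemma lpow_plus: "lpow y i (u + v) = lpow y i u + lpow y i v"
  by (induct i) (simp_all add: lpow_Suc distrib_left)
lemma rpow_plus: "rpow (u + v) y j = rpow u y j + rpow v y j"
  by (induct j) (simp_all add: rpow_Suc distrib_right)
lemma lpow_zero[simp]: "lpow y i 0 = 0"
  by (induct i) (simp_all add: lpow_Suc)
lemma rpow_zero[simp]: "rpow 0 y j = 0"
  by (induct j) (simp_all add: rpow_Suc)
lemma lpow_sum: "lpow y i (sum f A) = (\<Sum>a\<in>A. lpow y i (f a))"
  by (induct A rule: infinite_finite_induct) (simp_all add: lpow_plus)
lemma rpow_sum: "rpow (sum f A) y j = (\<Sum>a\<in>A. rpow (f a) y j)"
  by (induct A rule: infinite_finite_induct) (simp_all add: rpow_plus)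
lemma lpow_minus: "lpow y i (u - v) = lpow y i u - lpow y i v"
  by (induct i) (simp_all add: lpow_Suc right_diff_distrib)
lemma rpow_minus: "rpow (u - v) y j = rpow u y j - rpow v y j"
  by (induct j) (simp_all add: rpow_Suc left_diff_distrib)

lemma choose_Suc_self[simp]: "n choose Suc n = 0" by (simp add: binomial_eq_0)

locale alg =
  fixes sc :: "'k::idom \<Rightarrow> 'r::ring \<Rightarrow> 'r"
  assumes alg: "algebra_over sc"
begin

sublocale module sc
  using alg unfolding algebra_over_def by blast

lemma sc_multL: "sc c (u * v) = sc c u * v"
  using alg unfolding algebra_over_def by blast
lemma sc_multR: "sc c (u * v) = u * sc c v"
  using alg unfolding algebra_over_def by blast

lemma lpow_sc: "lpow y i (sc c w) = sc c (lpow y i w)"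
  by (induct i) (simp_all add: lpow_Suc sc_multR)
lemma rpow_sc: "rpow (sc c w) y j = sc c (rpow w y j)"
  by (induct j) (simp_all add: rpow_Suc sc_multL)

lemma lpow_z: "lpow (y + sc t (y*y)) a w = (\<Sum>j\<le>a. sc (t^j) (sc (of_nat (a choose j)) (lpow y (a+j) w)))"
proof (induct a)
  case 0
  then show ?case by simp
next
  case (Suc a)
  define S where "S = lpow (y + sc t (y*y)) a w"
  have e1: "y * S = (\<Sum>j\<le>Suc a. sc (t^j) (sc (of_nat (a choose j)) (lpow y (Suc a + j) w)))"
    unfolding S_def Suc by (simp add: sum_distrib_left sc_multR[symmetric] lpow_Suc)
  have e2: "sc t (y*y) * S = (\<Sum>j\<le>Suc a. sc (t^j) (sc (if j = 0 then 0 else of_nat (a choose (j-1))) (lpow y (Suc a + j) w)))"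
    unfolding S_def Suc sum.atMost_Suc_shift
    by (simp add: sum_distrib_left sc_multR[symmetric] sc_multL[symmetric] lpow_Suc mult.assoc scale_sum_right mult_ac)
  have "lpow (y + sc t (y*y)) (Suc a) w = y * S + sc t (y*y) * S"
    by (simp add: S_def lpow_Suc distrib_right)
  also have "\<dots> = (\<Sum>j\<le>Suc a. sc (t^j) (sc (of_nat (Suc a choose j)) (lpow y (Suc a + j) w)))"
    unfolding e1 e2 sum.distrib[symmetric] scale_right_distrib[symmetric] scale_left_distrib[symmetric]
    apply (rule sum.cong, simp)
    subgoal for j by (cases j) (simp_all add: of_nat_add[symmetric] add.commute del: of_nat_add)
    done
  finally show ?case .
qed

lemma rpow_z: "rpow w (y + sc t (y*y)) a = (\<Sum>j\<le>a. sc (t^j) (sc (of_nat (a choose j)) (rpow w y (a+j))))"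
proof (induct a)
  case 0
  then show ?case by simp
next
  case (Suc a)
  define S where "S = rpow w (y + sc t (y*y)) a"
  have e1: "S * y = (\<Sum>j\<le>Suc a. sc (t^j) (sc (of_nat (a choose j)) (rpow w y (Suc a + j))))"
    unfolding S_def Suc by (simp add: sum_distrib_right sc_multL[symmetric] rpow_Suc)
  have e2: "S * sc t (y*y) = (\<Sum>j\<le>Suc a. sc (t^j) (sc (if j = 0 then 0 else of_nat (a choose (j-1))) (rpow w y (Suc a + j))))"
    unfolding S_def Suc sum.atMost_Suc_shift
    by (simp add: sum_distrib_right sc_multR[symmetric] sc_multL[symmetric] rpow_Suc mult.assoc scale_sum_right mult_ac)
  have "rpow w (y + sc t (y*y)) (Suc a) = S * y + S * sc t (y*y)"
    by (simp add: S_def rpow_Suc distrib_left)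
  also have "\<dots> = (\<Sum>j\<le>Suc a. sc (t^j) (sc (of_nat (Suc a choose j)) (rpow w y (Suc a + j))))"
    unfolding e1 e2 sum.distrib[symmetric] scale_right_distrib[symmetric] scale_left_distrib[symmetric]
    apply (rule sum.cong, simp)
    subgoal for j by (cases j) (simp_all add: of_nat_add[symmetric] add.commute del: of_nat_add)
    done
  finally show ?case .
qed

end

lemma shift_sum:
  fixes f :: "nat \<Rightarrow> nat \<Rightarrow> 'a::comm_monoid_add"
  assumes "s + d \<le> N"
  shows "(\<Sum>c\<le>d. f (s+c) c) = (\<Sum>j\<le>N. if s \<le> j \<and> j - s \<le> d then f j (j - s) else 0)"
proof -
  have "(\<Sum>j\<le>N. if s \<le> j \<and> j - s \<le> d then f j (j - s) else 0)
      = (\<Sum>j\<in>{j\<in>{..N}. s \<le> j \<and> j - s \<le> d}. f j (j - s))"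
    by (rule sym, rule sum.inter_filter) simp
  also have "{j\<in>{..N}. s \<le> j \<and> j - s \<le> d} = {0+s..d+s}" using assms by auto
  also have "(\<Sum>j\<in>{0+s..d+s}. f j (j - s)) = (\<Sum>c\<in>{0..d}. f (c+s) c)"
    by (subst sum.shift_bounds_cl_nat_ivl) simp
  finally show ?thesis by (simp add: atLeast0AtMost add.commute)
qed

context alg begin
lemma collect:
  assumes "finite A" "\<forall>a\<in>A. e a + d \<le> N"
  shows "(\<Sum>a\<in>A. \<Sum>c\<le>d. sc (t^(e a + c)) (h a c))
       = (\<Sum>j\<le>N. sc (t^j) (\<Sum>a\<in>A. if e a \<le> j \<and> j - e a \<le> d then h a (j - e a) else 0))"
proof -
  have "(\<Sum>j\<le>N. sc (t^j) (\<Sum>a\<in>A. if e a \<le> j \<and> j - e a \<le> d then h a (j - e a) else 0))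
     = (\<Sum>j\<le>N. \<Sum>a\<in>A. if e a \<le> j \<and> j - e a \<le> d then sc (t^j) (h a (j - e a)) else 0)"
    by (simp add: scale_sum_right if_distrib cong: if_cong)
  also have "\<dots> = (\<Sum>a\<in>A. \<Sum>j\<le>N. if e a \<le> j \<and> j - e a \<le> d then sc (t^j) (h a (j - e a)) else 0)"
    by (rule sum.swap)
  also have "\<dots> = (\<Sum>a\<in>A. \<Sum>c\<le>d. sc (t^(e a + c)) (h a c))"
    apply (rule sum.cong, simp)
    subgoal for a
      using shift_sum[of "e a" d N "\<lambda>j c. sc (t^j) (h a c)"] assms(2) by simp
    done
  finally show ?thesis by simp
qed
end


lemma finite_bad:
  "finite (\<Union>i\<le>(d::nat). {x::'a::idom. poly (monom 1 (Suc d) - monom 1 i) x = 0})"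
proof (rule finite_UN_I, simp)
  fix i assume "i \<in> {..d}"
  then have "i \<noteq> Suc d" by auto
  have "monom (1::'a) (Suc d) - monom 1 i \<noteq> 0"
  proof
    assume h: "monom (1::'a) (Suc d) - monom 1 i = 0"
    have "coeff (monom (1::'a) (Suc d) - monom 1 i) (Suc d) = 0" by (simp only: h coeff_0)
    with \<open>i \<noteq> Suc d\<close> show False by (simp add: coeff_monom)
  qed
  then show "finite {x::'a. poly (monom 1 (Suc d) - monom 1 i) x = 0}"
    by (rule poly_roots_finite)
qed

context alg begin
lemma vdm:
  assumes inf: "infinite (UNIV::'k set)" and tf: "torsion_free sc"
  shows "(\<forall>t. (\<Sum>j\<le>d. sc (t^j) (v j)) = 0) \<Longrightarrow> j \<le> d \<Longrightarrow> v j = 0"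
proof (induct d arbitrary: v j)
  case 0
  then show ?case by simp
next
  case (Suc d)
  obtain c :: 'k where c: "c \<notin> (\<Union>i\<le>d. {x::'k. poly (monom 1 (Suc d) - monom 1 i) x = 0})"
    using ex_new_if_finite[OF inf finite_bad[of d]] by blast
  have cne: "c^i - c^(Suc d) \<noteq> 0" if "i \<le> d" for i
    using c that by (auto simp: poly_monom) (metis atMost_iff)
  define v' where "v' i = sc (c^i - c^(Suc d)) (v i)" for i
  have "(\<Sum>i\<le>d. sc (t^i) (v' i)) = 0" for t
  proof -
    have "(\<Sum>i\<le>d. sc (t^i) (v' i)) = (\<Sum>i\<le>Suc d. sc (t^i) (sc (c^i - c^(Suc d)) (v i)))"
      by (simp add: v'_def)
    also have "\<dots> = (\<Sum>i\<le>Suc d. sc ((c*t)^i) (v i)) - sc (c^(Suc d)) (\<Sum>i\<le>Suc d. sc (t^i) (v i))"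
      unfolding scale_sum_right sum_subtractf[symmetric]
      by (rule sum.cong) (simp_all add: power_mult_distrib scale_left_diff_distrib scale_right_diff_distrib mult.commute)
    also have "\<dots> = 0" using Suc.prems(1) by simp
    finally show ?thesis .
  qed
  then have v'0: "v' i = 0" if "i \<le> d" for i using Suc.hyps[of v' i] that by blast
  have vi: "v i = 0" if "i \<le> d" for i
    using v'0[OF that] cne[OF that] tf unfolding v'_def torsion_free_def by metis
  show ?case
  proof (cases "j \<le> d")
    case True then show ?thesis using vi by blast
  next
    case False
    then have j: "j = Suc d" using Suc.prems(2) by simp
    have "0 = (\<Sum>i\<le>Suc d. sc (1^i) (v i))" using Suc.prems(1) by (metis (no_types))
    also have "\<dots> = v (Suc d)" using vi by simp
    finally show ?thesis using j by simp
  qed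
qed
end


context alg begin
lemma eseq_exp:
  "eseq x y n = (\<Sum>r\<le>n. sc ((-1)^r * of_nat (n choose r)) (lpow y r (rpow x y (n - r))))"
proof (induct n)
  case 0
  then show ?case by simp
next
  case (Suc n)
  define e where "e = eseq x y n"
  have e1: "e * y = (\<Sum>r\<le>Suc n. sc ((-1)^r * of_nat (n choose r)) (lpow y r (rpow x y (Suc n - r))))"
    unfolding e_def Suc
    apply (simp add: sum_distrib_right sc_multL[symmetric] lpow_mult[symmetric] rpow_Suc[symmetric])
    apply (rule sum.cong, simp)
    by (simp add: Suc_diff_le)
  have e2: "y * e = (\<Sum>r\<le>Suc n. sc (if r = 0 then 0 else (-1)^(r-1) * of_nat (n choose (r-1))) (lpow y r (rpow x y (Suc n - r))))"
    unfolding e_def Suc sum.atMost_Suc_shift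
    by (simp add: sum_distrib_left sc_multR[symmetric] lpow_Suc)
  have "eseq x y (Suc n) = e * y - y * e" by (simp add: e_def comm_def)
  also have "\<dots> = (\<Sum>r\<le>Suc n. sc ((-1)^r * of_nat (Suc n choose r)) (lpow y r (rpow x y (Suc n - r))))"
    unfolding e1 e2 sum_subtractf[symmetric] scale_left_diff_distrib[symmetric]
    apply (rule sum.cong, simp)
    subgoal for r by (cases r) (simp_all add: algebra_simps)
    done
  finally show ?case .
qed
end


context alg begin
definition Bc :: "nat \<Rightarrow> 'r \<Rightarrow> 'r \<Rightarrow> nat \<Rightarrow> nat \<Rightarrow> 'r" where
  "Bc n x y i j = (\<Sum>r\<le>i. if r \<le> j \<and> j - r \<le> n - i
      then sc (of_nat ((i choose r) * ((n-i) choose (j-r)))) (lpow y (i+r) (rpow x y (n-i+(j-r)))) else 0)"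

definition Ac :: "nat \<Rightarrow> (nat \<Rightarrow> 'k) \<Rightarrow> 'r \<Rightarrow> 'r \<Rightarrow> nat \<Rightarrow> 'r" where
  "Ac n a x y j = (\<Sum>i\<le>n. sc (a i) (Bc n x y i j))"

lemma inner_exp:
  assumes "i \<le> n"
  shows "lpow (y + sc t (y*y)) i (rpow x (y + sc t (y*y)) (n-i)) = (\<Sum>j\<le>n. sc (t^j) (Bc n x y i j))"
proof -
  define h where "h r s = sc (of_nat ((i choose r) * ((n-i) choose s))) (lpow y (i+r) (rpow x y (n-i+s)))" for r s
  have "lpow (y + sc t (y*y)) i (rpow x (y + sc t (y*y)) (n-i))
      = (\<Sum>s\<le>n-i. \<Sum>r\<le>i. sc (t^(r+s)) (h r s))"
    unfolding rpow_z lpow_sum lpow_sc lpow_z h_def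
    by (simp add: scale_sum_right power_add mult_ac)
  also have "\<dots> = (\<Sum>r\<le>i. \<Sum>s\<le>n-i. sc (t^(id r+s)) (h r s))"
    by (simp add: sum.swap[of _ "{..n-i}"])
  also have "\<dots> = (\<Sum>j\<le>n. sc (t^j) (\<Sum>r\<le>i. if id r \<le> j \<and> j - id r \<le> n - i then h r (j - id r) else 0))"
    by (rule collect) (use assms in auto)
  also have "\<dots> = (\<Sum>j\<le>n. sc (t^j) (Bc n x y i j))"
    unfolding Bc_def h_def id_def by simp
  finally show ?thesis .
qed

lemma alpha_exp:
  "(\<Sum>i\<le>n. sc (a i) (lpow (y + sc t (y*y)) i (rpow x (y + sc t (y*y)) (n-i))))
    = (\<Sum>j\<le>n. sc (t^j) (Ac n a x y j))"
proof -
  have "(\<Sum>i\<le>n. sc (a i) (lpow (y + sc t (y*y)) i (rpow x (y + sc t (y*y)) (n-i))))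
     = (\<Sum>i\<le>n. sc (a i) (\<Sum>j\<le>n. sc (t^j) (Bc n x y i j)))"
    by (rule sum.cong) (simp_all add: inner_exp)
  also have "\<dots> = (\<Sum>j\<le>n. sc (t^j) (Ac n a x y j))"
    unfolding Ac_def scale_sum_right
    by (subst sum.swap) (simp add: ac_simps)
  finally show ?thesis .
qed

lemma outer_exp:
  "lpow (y + sc t (y*y)) m (rpow (\<Sum>c\<le>n. sc (t^c) (u c)) (y + sc t (y*y)) k)
   = (\<Sum>j\<le>m+k+n. sc (t^j) (\<Sum>ab\<in>{..m}\<times>{..k}. if fst ab + snd ab \<le> j \<and> j - (fst ab + snd ab) \<le> n then
        sc (of_nat ((m choose fst ab) * (k choose snd ab))) (lpow y (m + fst ab) (rpow (u (j - (fst ab + snd ab))) y (k + snd ab))) else 0))"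
proof -
  define h where "h ab c = sc (of_nat ((m choose fst ab) * (k choose snd ab))) (lpow y (m + fst ab) (rpow (u c) y (k + snd ab)))" for ab c
  have "lpow (y + sc t (y*y)) m (rpow (\<Sum>c\<le>n. sc (t^c) (u c)) (y + sc t (y*y)) k)
      = (\<Sum>b\<le>k. \<Sum>c\<le>n. \<Sum>a\<le>m. sc (t^(a+b+c)) (h (a,b) c))"
    unfolding rpow_z lpow_z rpow_sum lpow_sum lpow_sc rpow_sc h_def
    by (simp add: scale_sum_right power_add mult_ac)
  also have "\<dots> = (\<Sum>b\<le>k. \<Sum>a\<le>m. \<Sum>c\<le>n. sc (t^(a+b+c)) (h (a,b) c))"
    by (rule sum.cong, simp, rule sum.swap)
  also have "\<dots> = (\<Sum>a\<le>m. \<Sum>b\<le>k. \<Sum>c\<le>n. sc (t^(a+b+c)) (h (a,b) c))"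
    by (rule sum.swap)
  also have "\<dots> = (\<Sum>ab\<in>{..m}\<times>{..k}. \<Sum>c\<le>n. sc (t^((fst ab + snd ab)+c)) (h ab c))"
    apply (rule trans, rule sum.cartesian_product)
    by (rule sum.cong) auto
  also have "\<dots> = (\<Sum>j\<le>m+k+n. sc (t^j) (\<Sum>ab\<in>{..m}\<times>{..k}. if fst ab + snd ab \<le> j \<and> j - (fst ab + snd ab) \<le> n then h ab (j - (fst ab + snd ab)) else 0))"
    by (rule collect[where e="\<lambda>ab. fst ab + snd ab"]) auto
  finally show ?thesis unfolding h_def .
qed
end


lemma lr_split: "lpow y (m+a) (rpow w y (k+b)) = lpow y a (rpow (lpow y m (rpow w y k)) y b)"
  by (simp add: lpow_rpow[symmetric] lpow_add rpow_add add.commute)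

context alg begin
lemma E_zero:
  assumes inf: "infinite (UNIV::'k set)" and tf: "torsion_free sc"
    and hyp: "\<forall>x y :: 'r. lpow y m (rpow (\<Sum>i\<le>n. sc (a i) (lpow y i (rpow x y (n - i)))) y k) = 0"
  shows "j \<le> n \<Longrightarrow> lpow y m (rpow (Ac n a x y j) y k) = 0"
proof -
  define coef where "coef j x = (\<Sum>ab\<in>{..m}\<times>{..k}. if fst ab + snd ab \<le> j \<and> j - (fst ab + snd ab) \<le> n then
        sc (of_nat ((m choose fst ab) * (k choose snd ab))) (lpow y (m + fst ab) (rpow (Ac n a x y (j - (fst ab + snd ab))) y (k + snd ab))) else 0)" for j x
  have c0: "coef j x = 0" if "j \<le> m+k+n" for j x
  proof (rule vdm[OF inf tf _ that])
    show "\<forall>t. (\<Sum>j\<le>m+k+n. sc (t^j) (coef j x)) = 0"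
    proof
      fix t
      have "0 = lpow (y + sc t (y*y)) m (rpow (\<Sum>i\<le>n. sc (a i) (lpow (y + sc t (y*y)) i (rpow x (y + sc t (y*y)) (n - i)))) (y + sc t (y*y)) k)"
        using hyp by simp
      also have "\<dots> = (\<Sum>j\<le>m+k+n. sc (t^j) (coef j x))"
        unfolding alpha_exp outer_exp coef_def ..
      finally show "(\<Sum>j\<le>m+k+n. sc (t^j) (coef j x)) = 0" by simp
    qed
  qed
  show "j \<le> n \<Longrightarrow> lpow y m (rpow (Ac n a x y j) y k) = 0"
  proof (induct j arbitrary: x rule: less_induct)
    case (less j)
    define f where "f ab = (if fst ab + snd ab \<le> j \<and> j - (fst ab + snd ab) \<le> n then
        sc (of_nat ((m choose fst ab) * (k choose snd ab))) (lpow y (m + fst ab) (rpow (Ac n a x y (j - (fst ab + snd ab))) y (k + snd ab))) else 0)" for ab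
    have fz: "f ab = 0" if "ab \<in> {..m}\<times>{..k} - {(0,0)}" for ab
    proof (cases "fst ab + snd ab \<le> j")
      case True
      have "fst ab + snd ab > 0" using that by (cases ab) auto
      then have "j - (fst ab + snd ab) < j" "j - (fst ab + snd ab) \<le> n" using True less.prems by auto
      then have "lpow y m (rpow (Ac n a x y (j - (fst ab + snd ab))) y k) = 0" using less.hyps by blast
      then show ?thesis unfolding f_def lr_split by simp
    qed (simp add: f_def)
    have "0 = coef j x" using c0 less.prems by simp
    also have "\<dots> = (\<Sum>ab\<in>{..m}\<times>{..k}. f ab)" unfolding coef_def f_def ..
    also have "\<dots> = f (0,0) + (\<Sum>ab\<in>{..m}\<times>{..k} - {(0,0)}. f ab)"
      by (rule sum.remove) auto
    also have "\<dots> = f (0,0)" using fz by simp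
    also have "\<dots> = lpow y m (rpow (Ac n a x y j) y k)" using less.prems by (simp add: f_def)
    finally show ?case by simp
  qed
qed
end


lemma alt_sum: "(\<Sum>s\<le>d. (-1::'a::comm_ring_1)^s * of_nat (d choose s)) = (if d = 0 then 1 else 0)"
  using choose_alternating_sum[of d] by auto

context alg begin
lemma comb1_i:
  assumes "i \<le> n"
  shows "(\<Sum>j\<le>n. sc ((-1)^j) (rpow (Bc n x y i j) y (n-j))) = (if i = n then lpow y n (eseq x y n) else 0)"
proof -
  define W where "W r = lpow y (i+r) (rpow x y ((n-r)+(n-i)))" for r
  define h where "h r s = sc (of_nat ((i choose r) * ((n-i) choose s))) (W r)" for r s
  have "(\<Sum>j\<le>n. sc ((-1)^j) (rpow (Bc n x y i j) y (n-j)))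
      = (\<Sum>j\<le>n. sc ((-1)^j) (\<Sum>r\<le>i. if id r \<le> j \<and> j - id r \<le> n - i then h r (j - id r) else 0))"
    unfolding Bc_def rpow_sum
    apply (rule sum.cong, simp)
    apply (rule arg_cong[where f="sc _"])
    apply (rule sum.cong, simp)
    using assms by (auto simp: h_def W_def rpow_sc lpow_rpow[symmetric] rpow_add add.commute)
  also have "\<dots> = (\<Sum>r\<le>i. \<Sum>s\<le>n-i. sc ((-1)^(id r+s)) (h r s))"
    by (rule collect[symmetric]) (use assms in auto)
  also have "\<dots> = (\<Sum>r\<le>i. sc ((-1)^r * of_nat (i choose r) * (\<Sum>s\<le>n-i. (-1)^s * of_nat ((n-i) choose s))) (W r))"
    unfolding h_def sum_distrib_left scale_sum_left
    by (simp add: power_add mult_ac)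
  also have "\<dots> = (if i = n then lpow y n (eseq x y n) else 0)"
  proof (cases "i = n")
    case True
    then show ?thesis
      unfolding alt_sum eseq_exp lpow_sum lpow_sc W_def
      by (simp add: lpow_add)
  next
    case False
    then show ?thesis using assms unfolding alt_sum by simp
  qed
  finally show ?thesis .
qed

lemma comb1:
  "(\<Sum>j\<le>n. sc ((-1)^j) (rpow (Ac n a x y j) y (n-j))) = sc (a n) (lpow y n (eseq x y n))"
proof -
  have "(\<Sum>j\<le>n. sc ((-1)^j) (rpow (Ac n a x y j) y (n-j)))
      = (\<Sum>i\<le>n. sc (a i) (\<Sum>j\<le>n. sc ((-1)^j) (rpow (Bc n x y i j) y (n-j))))"
    unfolding Ac_def rpow_sum rpow_sc scale_sum_right
    by (subst sum.swap) (simp add: ac_simps)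
  also have "\<dots> = (\<Sum>i\<le>n. sc (a i) (if i = n then lpow y n (eseq x y n) else 0))"
    by (rule sum.cong) (simp_all add: comb1_i)
  also have "\<dots> = sc (a n) (lpow y n (eseq x y n))"
    by (simp add: if_distrib cong: if_cong)
  finally show ?thesis .
qed
end


lemma sign_aux: "s \<le> n \<Longrightarrow> (-1::'a::comm_ring_1)^n * (-1)^(n-s) = (-1)^s"
proof -
  assume "s \<le> n"
  then have "n = (n - s) + s" by simp
  then have "(-1::'a)^n * (-1)^(n-s) = (-1)^(n-s) * (-1)^(n-s) * (-1)^s"
    by (metis mult.commute mult.left_commute power_add)
  also have "\<dots> = (-1)^s" by (simp flip: power_add add: mult_2[symmetric] power_mult)
  finally show ?thesis .
qed

context alg begin
lemma eseq_exp2: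
  "eseq x y n = (\<Sum>s\<le>n. sc ((-1)^(n-s) * of_nat (n choose s)) (lpow y (n-s) (rpow x y s)))"
proof -
  have "eseq x y n = (\<Sum>r\<in>{0..n}. sc ((-1)^r * of_nat (n choose r)) (lpow y r (rpow x y (n - r))))"
    unfolding eseq_exp atLeast0AtMost ..
  also have "\<dots> = (\<Sum>s\<in>{0..n}. sc ((-1)^(n+0-s) * of_nat (n choose (n+0-s))) (lpow y (n+0-s) (rpow x y (n - (n+0-s)))))"
    by (rule sum.atLeastAtMost_rev)
  also have "\<dots> = (\<Sum>s\<le>n. sc ((-1)^(n-s) * of_nat (n choose s)) (lpow y (n-s) (rpow x y s)))"
    unfolding atLeast0AtMost
    by (rule sum.cong) (simp_all add: binomial_symmetric[symmetric])
  finally show ?thesis .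
qed

lemma comb2_i:
  assumes "i \<le> n"
  shows "(\<Sum>j\<le>n. sc ((-1)^j) (lpow y (n-j) (Bc n x y i j))) = (if i = 0 then sc ((-1)^n) (rpow (eseq x y n) y n) else 0)"
proof -
  define W where "W s = lpow y ((n-s)+i) (rpow x y ((n-i)+s))" for s
  define h where "h r s = sc (of_nat ((i choose r) * ((n-i) choose s))) (W s)" for r s
  have "(\<Sum>j\<le>n. sc ((-1)^j) (lpow y (n-j) (Bc n x y i j)))
      = (\<Sum>j\<le>n. sc ((-1)^j) (\<Sum>r\<le>i. if id r \<le> j \<and> j - id r \<le> n - i then h r (j - id r) else 0))"
    unfolding Bc_def lpow_sum
    apply (rule sum.cong, simp)
    apply (rule arg_cong[where f="sc _"])
    apply (rule sum.cong, simp)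
    using assms by (auto simp: h_def W_def lpow_sc lpow_add add_ac)
  also have "\<dots> = (\<Sum>r\<le>i. \<Sum>s\<le>n-i. sc ((-1)^(id r+s)) (h r s))"
    by (rule collect[symmetric]) (use assms in auto)
  also have "\<dots> = (\<Sum>s\<le>n-i. \<Sum>r\<le>i. sc ((-1)^(id r+s)) (h r s))"
    by (rule sum.swap)
  also have "\<dots> = (\<Sum>s\<le>n-i. sc ((-1)^s * of_nat ((n-i) choose s) * (\<Sum>r\<le>i. (-1)^r * of_nat (i choose r))) (W s))"
    unfolding h_def sum_distrib_left scale_sum_left
    by (simp add: power_add mult_ac)
  also have "\<dots> = (if i = 0 then sc ((-1)^n) (rpow (eseq x y n) y n) else 0)"
  proof (cases "i = 0")
    case True
    show ?thesis
      unfolding True alt_sum eseq_exp2 rpow_sum rpow_sc scale_sum_right W_def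
      apply simp
      apply (rule sum.cong, simp)
      subgoal for s
      proof -
        assume s: "s \<in> {..n}"
        have sg: "(-1::'k)^n * (-1)^(n-s) = (-1)^s" using s by (simp add: sign_aux)
        have eq: "(-1::'k)^n * ((-1)^(n-s) * of_nat (n choose s)) = (-1)^s * of_nat (n choose s)"
          by (simp only: mult.assoc[symmetric] sg)
        show ?thesis by (subst eq) (simp add: lpow_rpow[symmetric] rpow_add add.commute)
      qed
      done
  next
    case False
    then show ?thesis using assms unfolding alt_sum by simp
  qed
  finally show ?thesis .
qed

lemma comb2:
  "(\<Sum>j\<le>n. sc ((-1)^j) (lpow y (n-j) (Ac n a x y j))) = sc (a 0 * (-1)^n) (rpow (eseq x y n) y n)"
proof -
  have "(\<Sum>j\<le>n. sc ((-1)^j) (lpow y (n-j) (Ac n a x y j)))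
      = (\<Sum>i\<le>n. sc (a i) (\<Sum>j\<le>n. sc ((-1)^j) (lpow y (n-j) (Bc n x y i j))))"
    unfolding Ac_def lpow_sum lpow_sc scale_sum_right
    by (subst sum.swap) (simp add: ac_simps)
  also have "\<dots> = (\<Sum>i\<le>n. sc (a i) (if i = 0 then sc ((-1)^n) (rpow (eseq x y n) y n) else 0))"
    by (rule sum.cong) (simp_all add: comb2_i)
  also have "\<dots> = sc (a 0 * (-1)^n) (rpow (eseq x y n) y n)"
    by (simp add: if_distrib cong: if_cong)
  finally show ?thesis .
qed
end


lemma eseq_add: "eseq x y (i + j) = eseq (eseq x y i) y j"
  by (induct j) simp_all

context alg begin
lemma part1:
  fixes x y :: 'r
  assumes inf: "infinite (UNIV::'k set)" and tf: "torsion_free sc"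
    and hyp: "\<forall>x y :: 'r. lpow y m (rpow (\<Sum>i\<le>n. sc (a i) (lpow y i (rpow x y (n - i)))) y k) = 0"
    and an: "a n \<noteq> 0"
  shows "lpow y (m + n) (rpow (eseq x y n) y k) = 0"
proof -
  have "sc (a n) (lpow y (m + n) (rpow (eseq x y n) y k))
      = lpow y m (rpow (\<Sum>j\<le>n. sc ((-1)^j) (rpow (Ac n a x y j) y (n-j))) y k)"
    unfolding comb1 by (simp add: lpow_sc rpow_sc lpow_add[symmetric] lpow_rpow)
  also have "\<dots> = (\<Sum>j\<le>n. sc ((-1)^j) (rpow (lpow y m (rpow (Ac n a x y j) y k)) y (n-j)))"
    by (simp add: rpow_sum lpow_sum rpow_sc lpow_sc lpow_rpow rpow_add add.commute)
  also have "\<dots> = 0"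
    by (rule sum.neutral) (simp add: E_zero[OF inf tf hyp])
  finally show ?thesis using tf an unfolding torsion_free_def by blast
qed

lemma part2:
  fixes x y :: 'r
  assumes inf: "infinite (UNIV::'k set)" and tf: "torsion_free sc"
    and hyp: "\<forall>x y :: 'r. lpow y m (rpow (\<Sum>i\<le>n. sc (a i) (lpow y i (rpow x y (n - i)))) y k) = 0"
    and a0: "a 0 \<noteq> 0"
  shows "lpow y m (rpow (eseq x y n) y (n + k)) = 0"
proof -
  have "sc (a 0 * (-1)^n) (lpow y m (rpow (eseq x y n) y (n + k)))
      = lpow y m (rpow (\<Sum>j\<le>n. sc ((-1)^j) (lpow y (n-j) (Ac n a x y j))) y k)"
    unfolding comb2 by (simp add: lpow_sc rpow_sc rpow_add)
  also have "\<dots> = (\<Sum>j\<le>n. sc ((-1)^j) (lpow y (n-j) (lpow y m (rpow (Ac n a x y j) y k))))"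
    by (simp add: rpow_sum lpow_sum rpow_sc lpow_sc lpow_rpow lpow_add add.commute)
  also have "\<dots> = 0"
    by (rule sum.neutral) (simp add: E_zero[OF inf tf hyp])
  finally have "sc (a 0 * (-1)^n) (lpow y m (rpow (eseq x y n) y (n + k))) = 0" .
  moreover have "a 0 * (-1)^n \<noteq> 0" using a0 by simp
  ultimately show ?thesis using tf unfolding torsion_free_def by blast
qed

lemma part3:
  fixes x y :: 'r
  assumes p1: "\<And>x. lpow y (m + n) (rpow (eseq x y n) y k) = 0"
    and p2: "\<And>x. lpow y m (rpow (eseq x y n) y (n + k)) = 0"
  shows "lpow y m (rpow (eseq x y (3 * n - 1)) y k) = 0"
proof (cases "n = 0")
  case True
  then show ?thesis using p1[of x] by simp
next
  case False
  define e where "e = eseq x y n"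
  have "eseq x y (3 * n - 1) = eseq e y (2 * n - 1)"
    unfolding e_def eseq_add[symmetric] using False by (simp add: algebra_simps)
  also have "\<dots> = (\<Sum>r\<le>2*n-1. sc ((-1)^r * of_nat ((2*n-1) choose r)) (lpow y r (rpow e y (2*n-1 - r))))"
    by (rule eseq_exp)
  finally have ee: "eseq x y (3 * n - 1) = \<dots>" .
  have tz: "lpow y m (rpow (lpow y r (rpow e y (2*n-1 - r))) y k) = 0" if r: "r \<le> 2*n-1" for r
  proof (cases "n \<le> r")
    case True
    have "lpow y m (rpow (lpow y r (rpow e y (2*n-1 - r))) y k) = lpow y ((m+n) + (r-n)) (rpow e y (k + (2*n-1-r)))"
      using True by (simp add: lpow_rpow[symmetric] lpow_add rpow_add add_ac)
    also have "\<dots> = 0" unfolding lr_split e_def p1 by simp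
    finally show ?thesis .
  next
    case False
    have "lpow y m (rpow (lpow y r (rpow e y (2*n-1 - r))) y k) = lpow y (m + r) (rpow e y ((n + k) + (n-1-r)))"
      using False r by (simp add: lpow_rpow[symmetric] lpow_add rpow_add add_ac mult_2)
    also have "\<dots> = 0" unfolding lr_split e_def p2 by simp
    finally show ?thesis .
  qed
  show ?thesis unfolding ee rpow_sum lpow_sum rpow_sc lpow_sc
    by (rule sum.neutral, rule ballI, subst tz) auto
qed
end


theorem lemma2p3:
  fixes sc :: "'k::idom \<Rightarrow> 'r::ring \<Rightarrow> 'r"
    and a :: "nat \<Rightarrow> 'k"
    and m k n :: nat
  assumes "infinite (UNIV :: 'k set)"
    and "algebra_over sc"
    and "torsion_free sc"
    and hyp: "\<forall>x y :: 'r. lpow y m (rpow (\<Sum>i\<le>n. sc (a i) (lpow y i (rpow x y (n - i)))) y k) = 0"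
  shows "(a n \<noteq> 0 \<longrightarrow> (\<forall>x y :: 'r. lpow y (m + n) (rpow (eseq x y n) y k) = 0))
       \<and> (a 0 \<noteq> 0 \<longrightarrow> (\<forall>x y :: 'r. lpow y m (rpow (eseq x y n) y (n + k)) = 0))
       \<and> (a 0 \<noteq> 0 \<and> a n \<noteq> 0 \<longrightarrow> (\<forall>x y :: 'r. lpow y m (rpow (eseq x y (3 * n - 1)) y k) = 0))"
proof -
  interpret alg sc by unfold_locales (rule assms(2))
  have p1: "lpow y (m + n) (rpow (eseq x y n) y k) = 0" if "a n \<noteq> 0" for x y :: 'r
    using part1[OF assms(1) assms(3) hyp that] .
  have p2: "lpow y m (rpow (eseq x y n) y (n + k)) = 0" if "a 0 \<noteq> 0" for x y :: 'r
    using part2[OF assms(1) assms(3) hyp that] .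
  have p3: "lpow y m (rpow (eseq x y (3 * n - 1)) y k) = 0" if "a 0 \<noteq> 0" "a n \<noteq> 0" for x y :: 'r
    by (rule part3) (use p1 p2 that in auto)
  show ?thesis using p1 p2 p3 by blast
qed

end
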